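(* If $\mathbb{K}$ is an infinite field of characteristic $p>2$, then $I_p\subseteq T_2(E_{0^*}\otimes E_0)$.
   Context: $E$ is the Grassmann algebra of a vector space with countable basis $e_1,e_2,\dots$ (generated by the $e_i$ with $e_ie_j=-e_je_i$), with canonical $\mathbb{Z}_2$-grading $E=E^{(0)}\oplus E^{(1)}$ (even/odd length monomials). $A=E\otimes E$ has the $\mathbb{Z}_2\times\mathbb{Z}_2$-grading $A_{(a,b)}=E^{(a)}\otimes E^{(b)}$. $E_{0^*}\otimes E_0$ denotes $A$ with the $\mathbb{Z}_2$-grading $A_0=A_{(0,0)}\oplus A_{(1,0)}$, $A_1=A_{(0,1)}\oplus A_{(1,1)}$. $\mathbb{K}\langle Y\cup Z\rangle$ is the free associative algebra on disjoint countable sets $Y=\{y_1,\dots\}$ (degree $0$) and $Z=\{z_1,\dots\}$ (degree $1$). $T_2(A)$ is the set of $\mathbb{Z}_2$-graded identities: polynomials vanishing under every substitution of the $y_i$ by elements of $A_0$ and the $z_i$ by elements of $A_1$. A $T_2$-ideal is an ideal stable under all graded endomorphisms (sending $y_i$ to degree-$0$ and $z_i$ to degree-$1$ polynomials). Notation: $[a,b]=ab-ba$, $[a_1,\dots,a_n]=[[a_1,\dots,a_{n-1}],a_n]$, $a\circ b=ab+ba$. $I_p$ is the $T_2$-ideal generated by: (1) $[y_1,y_2,y_3]$, $[y_1,y_2,z_3]$; (2) $[y_1,z_2,y_3]$; (3) $[y_1,z_2]\circ z_3$; (4) $[z_1\circ z_2,z_3]$; (5) $(z_1\circ z_2)(z_3\circ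 z_4)-(z_1\circ z_3)(z_2\circ z_4)$; (6) $[x_1,y_2][y_3,x_4]+[x_1,y_3][y_2,x_4]$ for all choices $x_1\in\{y_1,z_1\}$, $x_4\in\{y_4,z_4\}$; (7) $[y_1,z_2](z_3\circ z_4)-[y_1,z_3](z_2\circ z_4)$; (8) $[y_1,z_1]\cdots[y_{2k-2},z_1](z_2\circ z_1)z_1^{2n}$ and (9) $[y_1,z_1]\cdots[y_{2k-1},z_1]z_1^{2n}$, for all integers $k\ge1$, $n\ge0$ with $2n+2k-1=p$. *)

theory Defs
  imports Main "HOL-Library.Poly_Mapping"
begin

datatype var = Y nat | Z nat   (* Y i has degree 0, Z i has degree 1 *)

text \<open>Noncommutative polynomials: finitely supported coefficient functions on words.\<close>
type_synonym 'k fpoly = "var list \<Rightarrow>\<^sub>0 'k"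

definition pconst :: "'k::ring_1 \<Rightarrow> 'k fpoly" where
  "pconst c = Poly_Mapping.single [] c"

definition pone :: "'k::ring_1 fpoly" where
  "pone = pconst 1"

definition pvar :: "var \<Rightarrow> 'k::ring_1 fpoly" where
  "pvar x = Poly_Mapping.single [x] 1"

abbreviation y :: "nat \<Rightarrow> 'k::ring_1 fpoly" where "y i \<equiv> pvar (Y i)"
abbreviation z :: "nat \<Rightarrow> 'k::ring_1 fpoly" where "z i \<equiv> pvar (Z i)"

definition pmul :: "'k::ring_1 fpoly \<Rightarrow> 'k fpoly \<Rightarrow> 'k fpoly" (infixl "\<odot>" 70) where
  "f \<odot> g = (\<Sum>u\<in>Poly_Mapping.keys f. \<Sum>v\<in>Poly_Mapping.keys g. Poly_Mapping.single (u @ v) (Poly_Mapping.lookup f u * Poly_Mapping.lookup g v))"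

definition pprod :: "'k::ring_1 fpoly list \<Rightarrow> 'k fpoly" where
  "pprod fs = foldr pmul fs pone"

definition pcomm :: "'k::ring_1 fpoly \<Rightarrow> 'k fpoly \<Rightarrow> 'k fpoly" where
  "pcomm a b = a \<odot> b - b \<odot> a"

definition pcirc :: "'k::ring_1 fpoly \<Rightarrow> 'k fpoly \<Rightarrow> 'k fpoly" where
  "pcirc a b = a \<odot> b + b \<odot> a"

definition pcomm3 :: "'k::ring_1 fpoly \<Rightarrow> 'k fpoly \<Rightarrow> 'k fpoly \<Rightarrow> 'k fpoly" where
  "pcomm3 a b c = pcomm (pcomm a b) c"

definition zcount :: "var list \<Rightarrow> nat" where
  "zcount w = length (filter (\<lambda>v. case v of Z _ \<Rightarrow> True | Y _ \<Rightarrow> False) w)"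

definition homogeneous :: "nat \<Rightarrow> 'k::ring_1 fpoly \<Rightarrow> bool" where
  "homogeneous d f \<longleftrightarrow> (\<forall>w\<in>Poly_Mapping.keys f. zcount w mod 2 = d)"

definition psubst :: "(var \<Rightarrow> 'k::ring_1 fpoly) \<Rightarrow> 'k fpoly \<Rightarrow> 'k fpoly" where
  "psubst \<sigma> f = (\<Sum>w\<in>Poly_Mapping.keys f. pconst (Poly_Mapping.lookup f w) \<odot> pprod (map \<sigma> w))"

definition graded_subst :: "(var \<Rightarrow> 'k::ring_1 fpoly) \<Rightarrow> bool" where
  "graded_subst \<sigma> \<longleftrightarrow> (\<forall>i. homogeneous 0 (\<sigma> (Y i)) \<and> homogeneous 1 (\<sigma> (Z i)))"

inductive_set T2_ideal :: "'k::ring_1 fpoly set \<Rightarrow> 'k fpoly set" for S where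
  gen: "f \<in> S \<Longrightarrow> f \<in> T2_ideal S"
| zero: "0 \<in> T2_ideal S"
| add: "f \<in> T2_ideal S \<Longrightarrow> g \<in> T2_ideal S \<Longrightarrow> f + g \<in> T2_ideal S"
| lmul: "f \<in> T2_ideal S \<Longrightarrow> g \<odot> f \<in> T2_ideal S"
| rmul: "f \<in> T2_ideal S \<Longrightarrow> f \<odot> g \<in> T2_ideal S"
| endo: "f \<in> T2_ideal S \<Longrightarrow> graded_subst \<sigma> \<Longrightarrow> psubst \<sigma> f \<in> T2_ideal S"

text \<open>Basis element e_S \<otimes> e_T (S, T finite sets of indices) is the key (S,T).\<close>
type_synonym 'k tgr = "(nat set \<times> nat set) \<Rightarrow>\<^sub>0 'k"

text \<open>e_S e_T = esign S T * e_(S \<union> T) in E (monomials written with increasing indices).\<close>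
definition esign :: "nat set \<Rightarrow> nat set \<Rightarrow> 'k::ring_1" where
  "esign S T = (if S \<inter> T = {} then (-1) ^ card {(s, t). s \<in> S \<and> t \<in> T \<and> t < s} else 0)"

definition amul :: "'k::ring_1 tgr \<Rightarrow> 'k tgr \<Rightarrow> 'k tgr" where
  "amul a b = (\<Sum>(S, T)\<in>Poly_Mapping.keys a. \<Sum>(S', T')\<in>Poly_Mapping.keys b.
      Poly_Mapping.single (S \<union> S', T \<union> T')
        (Poly_Mapping.lookup a (S, T) * Poly_Mapping.lookup b (S', T') * esign S S' * esign T T'))"

definition aconst :: "'k::ring_1 \<Rightarrow> 'k tgr" where
  "aconst c = Poly_Mapping.single ({}, {}) c"

definition aprod :: "'k::ring_1 tgr list \<Rightarrow> 'k tgr" where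
  "aprod as = foldr amul as (aconst 1)"

text \<open>The Z_2-grading of E_{0*} \<otimes> E_0: degree = parity of the second tensor factor.\<close>
definition A0 :: "'k::ring_1 tgr set" where
  "A0 = {a. \<forall>(S, T)\<in>Poly_Mapping.keys a. finite S \<and> finite T \<and> even (card T)}"

definition A1 :: "'k::ring_1 tgr set" where
  "A1 = {a. \<forall>(S, T)\<in>Poly_Mapping.keys a. finite S \<and> finite T \<and> odd (card T)}"

definition aeval :: "(var \<Rightarrow> 'k::ring_1 tgr) \<Rightarrow> 'k fpoly \<Rightarrow> 'k tgr" where
  "aeval \<phi> f = (\<Sum>w\<in>Poly_Mapping.keys f. amul (aconst (Poly_Mapping.lookup f w)) (aprod (map \<phi> w)))"

definition T2_id :: "'k::ring_1 fpoly set" where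
  "T2_id = {f. \<forall>\<phi>. (\<forall>i. \<phi> (Y i) \<in> A0 \<and> \<phi> (Z i) \<in> A1) \<longrightarrow> aeval \<phi> f = 0}"

definition gens :: "nat \<Rightarrow> 'k::ring_1 fpoly set" where
  "gens p =
     {pcomm3 (y 1) (y 2) (y 3), pcomm3 (y 1) (y 2) (z 3)}
   \<union> {pcomm3 (y 1) (z 2) (y 3)}
   \<union> {pcirc (pcomm (y 1) (z 2)) (z 3)}
   \<union> {pcomm (pcirc (z 1) (z 2)) (z 3)}
   \<union> {pcirc (z 1) (z 2) \<odot> pcirc (z 3) (z 4) - pcirc (z 1) (z 3) \<odot> pcirc (z 2) (z 4)}
   \<union> {pcomm x1 (y 2) \<odot> pcomm (y 3) x4 + pcomm x1 (y 3) \<odot> pcomm (y 2) x4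
       | x1 x4. x1 \<in> {y 1, z 1} \<and> x4 \<in> {y 4, z 4}}
   \<union> {pcomm (y 1) (z 2) \<odot> pcirc (z 3) (z 4) - pcomm (y 1) (z 3) \<odot> pcirc (z 2) (z 4)}
   \<union> {pprod (map (\<lambda>i. pcomm (y i) (z 1)) [1..<2*k-1]) \<odot> pcirc (z 2) (z 1)
         \<odot> pprod (replicate (2*n) (z 1))
       | k n. k \<ge> 1 \<and> 2*n + 2*k - 1 = p}
   \<union> {pprod (map (\<lambda>i. pcomm (y i) (z 1)) [1..<2*k]) \<odot> pprod (replicate (2*n) (z 1))
       | k n. k \<ge> 1 \<and> 2*n + 2*k - 1 = p}"

definition I :: "nat \<Rightarrow> 'k::ring_1 fpoly set" where
  "I p = T2_ideal (gens p)"

end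

theory Submission
  imports Defs
begin



definition bext :: "('a \<Rightarrow> 'a \<Rightarrow> 'a) \<Rightarrow> ('a \<Rightarrow> 'a \<Rightarrow> 'k::comm_ring_1) \<Rightarrow> ('a \<Rightarrow>\<^sub>0 'k) \<Rightarrow> ('a \<Rightarrow>\<^sub>0 'k) \<Rightarrow> ('a \<Rightarrow>\<^sub>0 'k)" where
"bext h s f g = (\<Sum>u\<in>Poly_Mapping.keys f. \<Sum>v\<in>Poly_Mapping.keys g. Poly_Mapping.single (h u v) (Poly_Mapping.lookup f u * Poly_Mapping.lookup g v * s u v))"

lemma bext_superset:
  assumes "finite K" "finite L" "Poly_Mapping.keys f \<subseteq> K" "Poly_Mapping.keys g \<subseteq> L"
  shows "bext h s f g = (\<Sum>u\<in>K. \<Sum>v\<in>L. Poly_Mapping.single (h u v) (Poly_Mapping.lookup f u * Poly_Mapping.lookup g v * s u v))"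
proof -
  have 1: "(\<Sum>v\<in>Poly_Mapping.keys g. Poly_Mapping.single (h u v) (Poly_Mapping.lookup f u * Poly_Mapping.lookup g v * s u v)) = 
           (\<Sum>v\<in>L. Poly_Mapping.single (h u v) (Poly_Mapping.lookup f u * Poly_Mapping.lookup g v * s u v))" for u
  proof (rule sum.mono_neutral_left)
    show "\<forall>i\<in>L - Poly_Mapping.keys g. Poly_Mapping.single (h u i) (Poly_Mapping.lookup f u * Poly_Mapping.lookup g i * s u i) = 0"
      by (simp add: not_in_keys_iff_lookup_eq_zero)
  qed (use assms in auto)
  have "bext h s f g = (\<Sum>u\<in>Poly_Mapping.keys f. \<Sum>v\<in>L. Poly_Mapping.single (h u v) (Poly_Mapping.lookup f u * Poly_Mapping.lookup g v * s u v))"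
    unfolding bext_def 1 ..
  also have "\<dots> = (\<Sum>u\<in>K. \<Sum>v\<in>L. Poly_Mapping.single (h u v) (Poly_Mapping.lookup f u * Poly_Mapping.lookup g v * s u v))"
  proof (rule sum.mono_neutral_left)
    show "\<forall>i\<in>K - Poly_Mapping.keys f. (\<Sum>v\<in>L. Poly_Mapping.single (h i v) (Poly_Mapping.lookup f i * Poly_Mapping.lookup g v * s i v)) = 0"
      by (simp add: not_in_keys_iff_lookup_eq_zero)
  qed (use assms in auto)
  finally show ?thesis .
qed

lemma bext_add1: "bext h s (f1 + f2) g = bext h s f1 g + bext h s f2 g"
proof -
  let ?K = "Poly_Mapping.keys f1 \<union> Poly_Mapping.keys f2"
  let ?L = "Poly_Mapping.keys g"
  have k: "Poly_Mapping.keys (f1 + f2) \<subseteq> ?K" by (rule keys_add)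
  have e1: "bext h s (f1 + f2) g = (\<Sum>u\<in>?K. \<Sum>v\<in>?L. Poly_Mapping.single (h u v) (Poly_Mapping.lookup (f1+f2) u * Poly_Mapping.lookup g v * s u v))"
    by (rule bext_superset) (use k in auto)
  have e2: "bext h s f1 g = (\<Sum>u\<in>?K. \<Sum>v\<in>?L. Poly_Mapping.single (h u v) (Poly_Mapping.lookup f1 u * Poly_Mapping.lookup g v * s u v))"
    by (rule bext_superset) auto
  have e3: "bext h s f2 g = (\<Sum>u\<in>?K. \<Sum>v\<in>?L. Poly_Mapping.single (h u v) (Poly_Mapping.lookup f2 u * Poly_Mapping.lookup g v * s u v))"
    by (rule bext_superset) auto
  show ?thesis unfolding e1 e2 e3
    by (simp only: lookup_add distrib_right single_add sum.distrib)
qed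

lemma bext_add2: "bext h s f (g1 + g2) = bext h s f g1 + bext h s f g2"
proof -
  let ?L = "Poly_Mapping.keys g1 \<union> Poly_Mapping.keys g2"
  let ?K = "Poly_Mapping.keys f"
  have k: "Poly_Mapping.keys (g1 + g2) \<subseteq> ?L" by (rule keys_add)
  have e1: "bext h s f (g1 + g2) = (\<Sum>u\<in>?K. \<Sum>v\<in>?L. Poly_Mapping.single (h u v) (Poly_Mapping.lookup f u * Poly_Mapping.lookup (g1+g2) v * s u v))"
    by (rule bext_superset) (use k in auto)
  have e2: "bext h s f g1 = (\<Sum>u\<in>?K. \<Sum>v\<in>?L. Poly_Mapping.single (h u v) (Poly_Mapping.lookup f u * Poly_Mapping.lookup g1 v * s u v))"
    by (rule bext_superset) auto
  have e3: "bext h s f g2 = (\<Sum>u\<in>?K. \<Sum>v\<in>?L. Poly_Mapping.single (h u v) (Poly_Mapping.lookup f u * Poly_Mapping.lookup g2 v * s u v))"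
    by (rule bext_superset) auto
  show ?thesis unfolding e1 e2 e3
    by (simp only: lookup_add distrib_right distrib_left single_add sum.distrib)
qed

lemma bext_zero1[simp]: "bext h s 0 g = 0" by (simp add: bext_def)
lemma bext_zero2[simp]: "bext h s f 0 = 0" by (simp add: bext_def)

lemma bext_single: "bext h s (Poly_Mapping.single u c) (Poly_Mapping.single v d) = Poly_Mapping.single (h u v) (c * d * s u v)"
  by (cases "c = 0"; cases "d = 0") (simp_all add: bext_def)

lemma bext_uminus1: "bext h s (- f) g = - bext h s f g"
proof -
  have "bext h s (- f) g + bext h s f g = 0"
    by (simp only: bext_add1[symmetric] add.left_inverse bext_zero1)
  then show ?thesis by (simp add: eq_neg_iff_add_eq_0)
qed
lemma bext_uminus2: "bext h s f (- g) = - bext h s f g"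
proof -
  have "bext h s f (- g) + bext h s f g = 0"
    by (simp only: bext_add2[symmetric] add.left_inverse bext_zero2)
  then show ?thesis by (simp add: eq_neg_iff_add_eq_0)
qed
lemma bext_diff1: "bext h s (f - g) k = bext h s f k - bext h s g k"
  by (simp only: diff_conv_add_uminus bext_add1 bext_uminus1)
lemma bext_diff2: "bext h s f (g - k) = bext h s f g - bext h s f k"
  by (simp only: diff_conv_add_uminus bext_add2 bext_uminus2)

lemma update_eq_add: "k \<notin> Poly_Mapping.keys f \<Longrightarrow> Poly_Mapping.update k c f = f + Poly_Mapping.single k c"
  by (rule poly_mapping_eqI) (auto simp: lookup_update lookup_add lookup_single in_keys_iff when_def)

lemma pm_induct[case_names zero add]:
  assumes "P 0" "\<And>f k c. P f \<Longrightarrow> k \<notin> Poly_Mapping.keys f \<Longrightarrow> c \<noteq> 0 \<Longrightarrow> P (f + Poly_Mapping.single k c)"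
  shows "P f"
  by (induction f rule: Poly_Mapping.update_induct) (use assms in \<open>simp_all add: update_eq_add\<close>)

lemma keys_bext: "Poly_Mapping.keys (bext h s f g) \<subseteq> {h u v | u v. u \<in> Poly_Mapping.keys f \<and> v \<in> Poly_Mapping.keys g}"
  unfolding bext_def
proof
  fix x assume "x \<in> Poly_Mapping.keys (\<Sum>u\<in>Poly_Mapping.keys f. \<Sum>v\<in>Poly_Mapping.keys g. Poly_Mapping.single (h u v) (Poly_Mapping.lookup f u * Poly_Mapping.lookup g v * s u v))"
  then obtain u where u: "u \<in> Poly_Mapping.keys f" "x \<in> Poly_Mapping.keys (\<Sum>v\<in>Poly_Mapping.keys g. Poly_Mapping.single (h u v) (Poly_Mapping.lookup f u * Poly_Mapping.lookup g v * s u v))"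
    using keys_sum[of "\<lambda>u. \<Sum>v\<in>Poly_Mapping.keys g. Poly_Mapping.single (h u v) (Poly_Mapping.lookup f u * Poly_Mapping.lookup g v * s u v)" "Poly_Mapping.keys f"] by auto
  then obtain v where v: "v \<in> Poly_Mapping.keys g" "x \<in> Poly_Mapping.keys (Poly_Mapping.single (h u v) (Poly_Mapping.lookup f u * Poly_Mapping.lookup g v * s u v))"
    using keys_sum[of "\<lambda>v. Poly_Mapping.single (h u v) (Poly_Mapping.lookup f u * Poly_Mapping.lookup g v * s u v)" "Poly_Mapping.keys g"] by auto
  then have "x = h u v" by (simp split: if_splits)
  with u v show "x \<in> {h u v | u v. u \<in> Poly_Mapping.keys f \<and> v \<in> Poly_Mapping.keys g}" by blast
qed

lemma pmul_bext: "pmul f g = bext (@) (\<lambda>_ _. 1) f g"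
  unfolding pmul_def bext_def by simp

definition hA :: "nat set \<times> nat set \<Rightarrow> nat set \<times> nat set \<Rightarrow> nat set \<times> nat set" where
  "hA k l = (fst k \<union> fst l, snd k \<union> snd l)"
definition sA :: "nat set \<times> nat set \<Rightarrow> nat set \<times> nat set \<Rightarrow> 'k::comm_ring_1" where
  "sA k l = esign (fst k) (fst l) * esign (snd k) (snd l)"

lemma amul_bext: "amul a b = bext hA sA a b"
  unfolding amul_def bext_def
proof (rule sum.cong[OF refl])
  fix u :: "nat set \<times> nat set"
  show "(case u of (S, T) \<Rightarrow> \<Sum>(S', T')\<in>Poly_Mapping.keys b. Poly_Mapping.single (S \<union> S', T \<union> T')
          (Poly_Mapping.lookup a (S, T) * Poly_Mapping.lookup b (S', T') * esign S S' * esign T T')) =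
    (\<Sum>v\<in>Poly_Mapping.keys b. Poly_Mapping.single (hA u v) (Poly_Mapping.lookup a u * Poly_Mapping.lookup b v * sA u v))"
    by (cases u) (auto simp: hA_def sA_def mult.assoc split: prod.splits intro!: sum.cong)
qed




definition invs :: "nat set \<Rightarrow> nat set \<Rightarrow> (nat \<times> nat) set" where
  "invs A B = {(s, t). s \<in> A \<and> t \<in> B \<and> t < s}"

lemma esign_inv: "esign A B = (if A \<inter> B = {} then (-1) ^ card (invs A B) else 0)"
  by (simp add: esign_def invs_def)

lemma finite_inv[simp]: "finite A \<Longrightarrow> finite B \<Longrightarrow> finite (invs A B)"
  by (rule finite_subset[of _ "A \<times> B"]) (auto simp: invs_def)

lemma inv_Un1: "A \<inter> B = {} \<Longrightarrow> finite A \<Longrightarrow> finite B \<Longrightarrow> finite C \<Longrightarrow>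
   card (invs (A \<union> B) C) = card (invs A C) + card (invs B C)"
proof -
  assume a: "A \<inter> B = {}" "finite A" "finite B" "finite C"
  have "invs (A \<union> B) C = invs A C \<union> invs B C" by (auto simp: invs_def)
  moreover have "invs A C \<inter> invs B C = {}" using a(1) by (auto simp: invs_def)
  ultimately show ?thesis using a by (simp add: card_Un_disjoint)
qed

lemma inv_Un2: "B \<inter> C = {} \<Longrightarrow> finite A \<Longrightarrow> finite B \<Longrightarrow> finite C \<Longrightarrow>
   card (invs A (B \<union> C)) = card (invs A B) + card (invs A C)"
proof -
  assume a: "B \<inter> C = {}" "finite A" "finite B" "finite C"
  have "invs A (B \<union> C) = invs A B \<union> invs A C" by (auto simp: invs_def)
  moreover have "invs A B \<inter> invs A C = {}" using a(1) by (auto simp: invs_def)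
  ultimately show ?thesis using a by (simp add: card_Un_disjoint)
qed

lemma esign_assoc:
  assumes "finite A" "finite B" "finite C"
  shows "(esign A B * esign (A \<union> B) C :: 'k::ring_1) = esign B C * esign A (B \<union> C)"
proof (cases "A \<inter> B = {} \<and> A \<inter> C = {} \<and> B \<inter> C = {}")
  case True
  then have d: "(A \<union> B) \<inter> C = {}" "A \<inter> (B \<union> C) = {}" by auto
  show ?thesis using True d assms
    by (simp add: esign_inv inv_Un1 inv_Un2 power_add[symmetric] ac_simps)
next
  case False
  then show ?thesis by (auto simp: esign_inv)
qed

lemma inv_swap: "A \<inter> B = {} \<Longrightarrow> finite A \<Longrightarrow> finite B \<Longrightarrow> card (invs A B) + card (invs B A) = card A * card B"
proof -
  assume a: "A \<inter> B = {}" "finite A" "finite B"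
  have "A \<times> B = invs A B \<union> (\<lambda>(t, s). (s, t)) ` invs B A"
    using a(1) by (auto simp: invs_def image_iff)
  moreover have "invs A B \<inter> (\<lambda>(t, s). (s, t)) ` invs B A = {}" by (auto simp: invs_def)
  moreover have "card ((\<lambda>(t, s). (s, t)) ` invs B A) = card (invs B A)"
    by (rule card_image) (auto simp: inj_on_def)
  moreover have "finite ((\<lambda>(t, s). (s, t)) ` invs B A)" using a by simp
  ultimately have "card (A \<times> B) = card (invs A B) + card (invs B A)"
    using a by (simp add: card_Un_disjoint)
  then show ?thesis by (simp add: card_cartesian_product)
qed

lemma neg1_sq[simp]: "(-1::'k::ring_1)^n * (-1)^n = 1"
  by (simp add: power_add[symmetric] mult_2[symmetric] power_mult)

lemma esign_swap:
  assumes "finite A" "finite B"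
  shows "(esign B A :: 'k::comm_ring_1) = (-1) ^ (card A * card B) * esign A B"
proof (cases "A \<inter> B = {}")
  case True
  then have "B \<inter> A = {}" by auto
  with True assms show ?thesis
    by (simp add: esign_inv inv_swap[symmetric] power_add ac_simps)
next
  case False then show ?thesis by (auto simp: esign_inv)
qed

lemma esign_empty1[simp]: "esign {} A = 1" by (simp add: esign_def)
lemma esign_empty2[simp]: "esign A {} = 1" by (simp add: esign_def)

definition fk :: "'k::zero tgr \<Rightarrow> bool" where
  "fk a \<longleftrightarrow> (\<forall>k\<in>Poly_Mapping.keys a. finite (fst k) \<and> finite (snd k))"

lemma fk_0[simp]: "fk 0" by (simp add: fk_def)
lemma fk_add: "fk (a::'k::comm_ring_1 tgr) \<Longrightarrow> fk b \<Longrightarrow> fk (a + b)"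
  unfolding fk_def
proof
  fix k assume "\<forall>k\<in>Poly_Mapping.keys a. finite (fst k) \<and> finite (snd k)" "\<forall>k\<in>Poly_Mapping.keys b. finite (fst k) \<and> finite (snd k)"
    "k \<in> Poly_Mapping.keys (a + b)"
  moreover have "k \<in> Poly_Mapping.keys a \<union> Poly_Mapping.keys b" using keys_add \<open>k \<in> Poly_Mapping.keys (a + b)\<close> by (rule subsetD)
  ultimately show "finite (fst k) \<and> finite (snd k)" by (auto simp only: Un_iff)
qed
lemma fk_uminus: "fk (a::'k::comm_ring_1 tgr) \<Longrightarrow> fk (- a)"
  unfolding fk_def by simp
lemma fk_diff: "fk (a::'k::comm_ring_1 tgr) \<Longrightarrow> fk b \<Longrightarrow> fk (a - b)"
  unfolding diff_conv_add_uminus by (intro fk_add fk_uminus)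
lemma fk_amul: "fk (a::'k::comm_ring_1 tgr) \<Longrightarrow> fk b \<Longrightarrow> fk (amul a b)"
  unfolding fk_def amul_bext
proof
  fix k assume a: "\<forall>k\<in>Poly_Mapping.keys a. finite (fst k) \<and> finite (snd k)" "\<forall>k\<in>Poly_Mapping.keys b. finite (fst k) \<and> finite (snd k)"
    "k \<in> Poly_Mapping.keys (bext hA sA a b)"
  then obtain u v where "k = hA u v" "u \<in> Poly_Mapping.keys a" "v \<in> Poly_Mapping.keys b"
    using subsetD[OF keys_bext a(3)] by blast
  with a show "finite (fst k) \<and> finite (snd k)" by (simp add: hA_def)
qed
lemma fk_single: "finite S \<Longrightarrow> finite T \<Longrightarrow> fk (Poly_Mapping.single (S, T) c)"
  by (simp add: fk_def)
lemma fk_aconst[simp]: "fk (aconst c)" by (simp add: aconst_def fk_def)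
lemma fk_add_single: "k \<notin> Poly_Mapping.keys f \<Longrightarrow> c \<noteq> 0 \<Longrightarrow>
    fk (f + Poly_Mapping.single k c) \<longleftrightarrow> fk f \<and> finite (fst k) \<and> finite (snd k)"
proof -
  assume a: "k \<notin> Poly_Mapping.keys f" "c \<noteq> 0"
  have "Poly_Mapping.keys (f + Poly_Mapping.single k c) = insert k (Poly_Mapping.keys f)"
    using a by (auto simp: in_keys_iff lookup_add lookup_single when_def split: if_splits)
  then show ?thesis by (auto simp: fk_def)
qed

lemma fk_induct[consumes 1, case_names zero add]:
  assumes "fk f" "P 0"
    "\<And>f k c. fk f \<Longrightarrow> P f \<Longrightarrow> k \<notin> Poly_Mapping.keys f \<Longrightarrow> c \<noteq> 0 \<Longrightarrow> finite (fst k) \<Longrightarrow> finite (snd k) \<Longrightarrow> P (f + Poly_Mapping.single k c)"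
  shows "P f"
proof -
  have "fk f \<longrightarrow> P f"
  proof (induction f rule: pm_induct)
    case zero then show ?case using assms(2) by simp
  next
    case (add f k c) then show ?case using assms(3) by (simp add: fk_add_single)
  qed
  then show ?thesis using assms(1) by simp
qed

lemma amul_add1: "amul (a + b) (c::'k::comm_ring_1 tgr) = amul a c + amul b c" by (simp add: amul_bext bext_add1)
lemma amul_add2: "amul a (b + c::'k::comm_ring_1 tgr) = amul a b + amul a c" by (simp add: amul_bext bext_add2)
lemma amul_single: "amul (Poly_Mapping.single k (c::'k::comm_ring_1)) (Poly_Mapping.single l d) = Poly_Mapping.single (hA k l) (c * d * sA k l)"
  by (simp add: amul_bext bext_single)
lemma amul_zero1[simp]: "amul 0 (b::'k::comm_ring_1 tgr) = 0" by (simp add: amul_bext)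
lemma amul_zero2[simp]: "amul (a::'k::comm_ring_1 tgr) 0 = 0" by (simp add: amul_bext)

lemma sA_assoc: "finite (fst k1) \<Longrightarrow> finite (snd k1) \<Longrightarrow> finite (fst k2) \<Longrightarrow> finite (snd k2) \<Longrightarrow> finite (fst k3) \<Longrightarrow> finite (snd k3) \<Longrightarrow>
  (sA k1 k2 * sA (hA k1 k2) k3 :: 'k::comm_ring_1) = sA k2 k3 * sA k1 (hA k2 k3)"
proof -
  assume f: "finite (fst k1)" "finite (snd k1)" "finite (fst k2)" "finite (snd k2)" "finite (fst k3)" "finite (snd k3)"
  have e1: "(esign (fst k1) (fst k2) * esign (fst k1 \<union> fst k2) (fst k3) :: 'k) = esign (fst k2) (fst k3) * esign (fst k1) (fst k2 \<union> fst k3)"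
    using f by (simp add: esign_assoc)
  have e2: "(esign (snd k1) (snd k2) * esign (snd k1 \<union> snd k2) (snd k3) :: 'k) = esign (snd k2) (snd k3) * esign (snd k1) (snd k2 \<union> snd k3)"
    using f by (simp add: esign_assoc)
  have "(sA k1 k2 * sA (hA k1 k2) k3 :: 'k) = (esign (fst k1) (fst k2) * esign (fst k1 \<union> fst k2) (fst k3)) * (esign (snd k1) (snd k2) * esign (snd k1 \<union> snd k2) (snd k3))"
    by (simp add: sA_def hA_def ac_simps)
  also have "\<dots> = (esign (fst k2) (fst k3) * esign (fst k1) (fst k2 \<union> fst k3)) * (esign (snd k2) (snd k3) * esign (snd k1) (snd k2 \<union> snd k3))"
    by (simp only: e1 e2)
  also have "\<dots> = sA k2 k3 * sA k1 (hA k2 k3)"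
    by (simp add: sA_def hA_def ac_simps)
  finally show ?thesis .
qed

lemma amul_assoc_sss:
  assumes "finite (fst k1)" "finite (snd k1)" "finite (fst k2)" "finite (snd k2)" "finite (fst k3)" "finite (snd k3)"
  shows "amul (amul (Poly_Mapping.single k1 x1) (Poly_Mapping.single k2 x2)) (Poly_Mapping.single k3 (x3::'k::comm_ring_1)) =
         amul (Poly_Mapping.single k1 x1) (amul (Poly_Mapping.single k2 x2) (Poly_Mapping.single k3 x3))"
proof -
  have h: "hA (hA k1 k2) k3 = hA k1 (hA k2 k3)" by (simp add: hA_def Un_assoc)
  have s: "x1 * x2 * sA k1 k2 * x3 * sA (hA k1 k2) k3 = x1 * (x2 * x3 * sA k2 k3) * (sA k1 (hA k2 k3) :: 'k)"
  proof -
    have "x1 * x2 * sA k1 k2 * x3 * sA (hA k1 k2) k3 = x1 * x2 * x3 * (sA k1 k2 * sA (hA k1 k2) k3 :: 'k)"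
      by (simp add: ac_simps)
    also have "\<dots> = x1 * x2 * x3 * (sA k2 k3 * sA k1 (hA k2 k3))" using sA_assoc assms by metis
    finally show ?thesis by (simp add: ac_simps)
  qed
  show ?thesis by (simp add: amul_single h s)
qed

lemma amul_assoc1:
  assumes "fk c" "finite (fst k1)" "finite (snd k1)" "finite (fst k2)" "finite (snd k2)"
  shows "amul (amul (Poly_Mapping.single k1 x1) (Poly_Mapping.single k2 x2)) c =
         amul (Poly_Mapping.single k1 x1) (amul (Poly_Mapping.single k2 (x2::'k::comm_ring_1)) c)"
  using assms(1)
proof (induction c rule: fk_induct)
  case zero then show ?case by simp
next
  case (add f k c) then show ?case using assms by (simp add: amul_add2 amul_assoc_sss)
qed

lemma amul_assoc2:
  assumes "fk b" "fk c" "finite (fst k1)" "finite (snd k1)"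
  shows "amul (amul (Poly_Mapping.single k1 x1) b) c = amul (Poly_Mapping.single k1 (x1::'k::comm_ring_1)) (amul b c)"
  using assms(1)
proof (induction b rule: fk_induct)
  case zero then show ?case by simp
next
  case (add f k d) then show ?case using assms by (simp add: amul_add2 amul_add1 amul_assoc1)
qed

lemma amul_assoc:
  assumes "fk a" "fk b" "fk (c :: 'k::comm_ring_1 tgr)"
  shows "amul (amul a b) c = amul a (amul b c)"
  using assms(1)
proof (induction a rule: fk_induct)
  case zero then show ?case by simp
next
  case (add f k d) then show ?case using assms by (simp add: amul_add1 amul_assoc2)
qed

lemma amul_one1: "fk a \<Longrightarrow> amul (aconst 1) a = (a :: 'k::comm_ring_1 tgr)"
proof (induction a rule: fk_induct)
  case zero then show ?case by simp
next
  case (add f k c) then show ?case by (simp add: aconst_def amul_add2 amul_single hA_def sA_def)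
qed

lemma amul_one2: "fk a \<Longrightarrow> amul a (aconst 1) = (a :: 'k::comm_ring_1 tgr)"
proof (induction a rule: fk_induct)
  case zero then show ?case by simp
next
  case (add f k c) then show ?case by (simp add: aconst_def amul_add1 amul_single hA_def sA_def)
qed

typedef (overloaded) ('k::comm_ring_1) alg = "{a :: 'k tgr. fk a}"
  morphisms rep abs
  by (rule exI[of _ 0]) simp

setup_lifting type_definition_alg

instantiation alg :: (comm_ring_1) ring_1
begin
lift_definition zero_alg :: "'a alg" is 0 by simp
lift_definition one_alg :: "'a alg" is "aconst 1" by simp
lift_definition plus_alg :: "'a alg \<Rightarrow> 'a alg \<Rightarrow> 'a alg" is "(+)" by (rule fk_add)
lift_definition minus_alg :: "'a alg \<Rightarrow> 'a alg \<Rightarrow> 'a alg" is "(-)" by (rule fk_diff)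
lift_definition uminus_alg :: "'a alg \<Rightarrow> 'a alg" is uminus by (rule fk_uminus)
lift_definition times_alg :: "'a alg \<Rightarrow> 'a alg \<Rightarrow> 'a alg" is amul by (rule fk_amul)
instance
proof
  fix a b c :: "'a alg"
  show "a * b * c = a * (b * c)" by transfer (rule amul_assoc)
  show "1 * a = a" by transfer (rule amul_one1)
  show "a * 1 = a" by transfer (rule amul_one2)
  show "(a + b) * c = a * c + b * c" by transfer (rule amul_add1)
  show "a * (b + c) = a * b + a * c" by transfer (rule amul_add2)
  show "a + b + c = a + (b + c)" by transfer (rule add.assoc)
  show "a + b = b + a" by transfer (rule add.commute)
  show "0 + a = a" by transfer simp
  show "- a + a = 0" by transfer simp
  show "a - b = a + - b" by transfer simp
  show "(0::'a alg) \<noteq> 1" by transfer (metis aconst_def lookup_single_eq lookup_zero zero_neq_one)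
qed
end




lift_definition sc :: "'k::comm_ring_1 \<Rightarrow> 'k alg" is aconst by simp

lift_definition amono :: "nat set \<Rightarrow> nat set \<Rightarrow> 'k::comm_ring_1 \<Rightarrow> 'k alg" is
  "\<lambda>S T c. if finite S \<and> finite T then Poly_Mapping.single (S, T) c else 0"
  by (auto simp: fk_def)

lemma rep_mono: "finite S \<Longrightarrow> finite T \<Longrightarrow> rep (amono S T c) = Poly_Mapping.single (S, T) c"
  by (simp add: amono.rep_eq)

lemma sc_mono: "sc c = amono {} {} c"
  by transfer (simp add: aconst_def)

lemma sc_add: "sc (c + d) = sc c + sc d"
  by transfer (simp add: aconst_def single_add)
lemma sc_0[simp]: "sc 0 = 0"
  by transfer (simp add: aconst_def)
lemma sc_1[simp]: "sc 1 = 1"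
  by transfer simp
lemma sc_uminus: "sc (- c) = - sc c"
  by transfer (simp add: aconst_def single_uminus)
lemma sc_mult: "sc (c * d) = sc c * sc d"
  by transfer (simp add: aconst_def amul_single hA_def sA_def)

lemma aconst_comm: "fk a \<Longrightarrow> amul (aconst c) a = amul a (aconst (c::'k::comm_ring_1))"
proof (induction a rule: fk_induct)
  case zero then show ?case by simp
next
  case (add f k d) then show ?case
    by (simp add: aconst_def amul_add1 amul_add2 amul_single hA_def sA_def mult.commute)
qed

lemma sc_comm: "sc c * a = a * sc c"
  by transfer (rule aconst_comm)

lemma of_nat_sc: "(of_nat n :: 'k::comm_ring_1 alg) = sc (of_nat n)"
  by (induction n) (simp_all add: sc_add)

lemma mono_mult: "finite S \<Longrightarrow> finite T \<Longrightarrow> finite S' \<Longrightarrow> finite T' \<Longrightarrow>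
  amono S T c * amono S' T' d = amono (S \<union> S') (T \<union> T') (c * d * (esign S S' * esign T T'))"
  by transfer (simp add: amul_single hA_def sA_def)

lemma mono_uminus: "amono S T (- c) = - amono S T c"
  by transfer (simp add: single_uminus)

lemma mono_0[simp]: "amono S T 0 = 0"
  by transfer simp

lemma rep_add_mono_keys:
  assumes "finite S" "finite T" "(S, T) \<notin> Poly_Mapping.keys (rep a)" "c \<noteq> 0"
  shows "Poly_Mapping.keys (rep (a + amono S T c)) = insert (S, T) (Poly_Mapping.keys (rep a))"
  using assms by (auto simp: plus_alg.rep_eq rep_mono in_keys_iff lookup_add lookup_single when_def split: if_splits)

lemma alg_induct[case_names zero add]:
  assumes "P 0"
    "\<And>a S T c. P a \<Longrightarrow> finite S \<Longrightarrow> finite T \<Longrightarrow> (S, T) \<notin> Poly_Mapping.keys (rep a) \<Longrightarrow> c \<noteq> 0 \<Longrightarrow> P (a + amono S T c)"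
  shows "P a"
proof -
  have "P (abs f)" if f: "fk f" for f
    using f
  proof (induction f rule: fk_induct)
    case zero
    then show ?case using assms(1) by (simp add: zero_alg_def)
  next
    case (add f k c)
    obtain S T where k: "k = (S, T)" by (cases k)
    have fS: "finite S" "finite T" using add k by auto
    have rf: "rep (abs f) = f" using add by (simp add: abs_inverse)
    have "abs (f + Poly_Mapping.single k c) = abs f + amono S T c"
      by (rule rep_inject[THEN iffD1]) (use add k fS rf in \<open>simp add: abs_inverse fk_add fk_single plus_alg.rep_eq rep_mono\<close>)
    moreover have "P (abs f + amono S T c)"
      by (rule assms(2)) (use add k fS rf in auto)
    ultimately show ?case by simp
  qed
  from this[of "rep a"] show ?thesis using rep[of a] by (simp add: rep_inverse)
qed

definition Gs :: "(nat set \<times> nat set \<Rightarrow> bool) \<Rightarrow> 'k::comm_ring_1 alg set" where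
  "Gs P = {a. \<forall>k\<in>Poly_Mapping.keys (rep a). P k}"

lemma Gs_0[simp]: "0 \<in> Gs P" by (simp add: Gs_def zero_alg.rep_eq)
lemma Gs_add: "a \<in> Gs P \<Longrightarrow> b \<in> Gs P \<Longrightarrow> a + b \<in> Gs P"
  unfolding Gs_def plus_alg.rep_eq mem_Collect_eq
proof
  fix k assume a: "\<forall>k\<in>Poly_Mapping.keys (rep a). P k" "\<forall>k\<in>Poly_Mapping.keys (rep b). P k"
    "k \<in> Poly_Mapping.keys (rep a + rep b)"
  have "k \<in> Poly_Mapping.keys (rep a) \<union> Poly_Mapping.keys (rep b)" by (rule subsetD[OF keys_add a(3)])
  with a show "P k" by blast
qed
lemma Gs_uminus: "a \<in> Gs P \<Longrightarrow> - a \<in> Gs P"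
  by (simp add: Gs_def uminus_alg.rep_eq)
lemma Gs_diff: "a \<in> Gs P \<Longrightarrow> b \<in> Gs P \<Longrightarrow> a - b \<in> Gs P"
  unfolding diff_conv_add_uminus by (intro Gs_add Gs_uminus)
lemma Gs_mono: "finite S \<Longrightarrow> finite T \<Longrightarrow> P (S, T) \<Longrightarrow> amono S T c \<in> Gs P"
  by (simp add: Gs_def rep_mono)
lemma Gs_mono': "finite S \<Longrightarrow> finite T \<Longrightarrow> c = 0 \<or> P (S, T) \<Longrightarrow> amono S T c \<in> Gs P"
  using Gs_mono by auto
lemma Gs_add_mono:
  assumes "finite S" "finite T" "(S, T) \<notin> Poly_Mapping.keys (rep a)" "c \<noteq> 0"
  shows "a + amono S T c \<in> Gs P \<longleftrightarrow> a \<in> Gs P \<and> P (S, T)"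
  using rep_add_mono_keys[OF assms] by (auto simp: Gs_def)

lemma Gs_sub: "(\<And>k. P k \<Longrightarrow> Q k) \<Longrightarrow> (Gs P :: 'k::comm_ring_1 alg set) \<subseteq> Gs Q"
  by (auto simp: Gs_def)

lemma Gs_induct[consumes 1, case_names zero add]:
  assumes "a \<in> Gs P" "Q 0"
    "\<And>a S T c. a \<in> Gs P \<Longrightarrow> Q a \<Longrightarrow> finite S \<Longrightarrow> finite T \<Longrightarrow> P (S, T) \<Longrightarrow> Q (a + amono S T c)"
  shows "Q a"
proof -
  have "a \<in> Gs P \<longrightarrow> Q a"
  proof (induction a rule: alg_induct)
    case zero then show ?case using assms(2) by simp
  next
    case (add a S T c) then show ?case using assms(3) by (simp add: Gs_add_mono)
  qed
  then show ?thesis using assms(1) by simp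
qed

definition G :: "bool \<Rightarrow> bool \<Rightarrow> 'k::comm_ring_1 alg set" where
  "G p q = Gs (\<lambda>k. odd (card (fst k)) = p \<and> odd (card (snd k)) = q)"

definition Ab :: "bool \<Rightarrow> 'k::comm_ring_1 alg set" where
  "Ab q = Gs (\<lambda>k. odd (card (snd k)) = q)"

lemma G_Ab: "a \<in> G p q \<Longrightarrow> a \<in> Ab q"
  unfolding G_def Ab_def Gs_def by auto

lemma neg1_pow_mult: "((-1::'k::comm_ring_1) ^ (m * n)) = (if odd m \<and> odd n then -1 else 1)"
  by (simp add: minus_one_power_iff)

definition sg :: "bool \<Rightarrow> bool \<Rightarrow> bool \<Rightarrow> bool \<Rightarrow> 'k::comm_ring_1 alg" where
  "sg p q p' q' = (if (p \<and> p') = (q \<and> q') then 1 else -1)"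

lemma sg_comm: "sg p q p' q' * x = x * sg p q p' q'"
  by (simp add: sg_def)

lemma mono_comm:
  assumes "finite S" "finite T" "finite S'" "finite T'"
  shows "amono S T c * amono S' T' d = sg (odd (card S)) (odd (card T)) (odd (card S')) (odd (card T')) * (amono S' T' d * amono S T c)"
proof -
  define P where "P = (odd (card S) \<and> odd (card S'))"
  define Q where "Q = (odd (card T) \<and> odd (card T'))"
  define k where "k = c * d * (esign S S' * esign T T' :: 'a)"
  have e1: "(esign S' S :: 'a) = (if P then -1 else 1) * esign S S'"
    using esign_swap[OF assms(1,3)] unfolding P_def by (simp add: neg1_pow_mult)
  have e2: "(esign T' T :: 'a) = (if Q then -1 else 1) * esign T T'"
    using esign_swap[OF assms(2,4)] unfolding Q_def by (simp add: neg1_pow_mult)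
  have co: "d * c * (esign S' S * esign T' T) = (if P = Q then k else - k)"
    unfolding e1 e2 k_def by (cases P; cases Q) (simp_all add: algebra_simps)
  have l: "amono S T c * amono S' T' d = amono (S \<union> S') (T \<union> T') k"
    using assms by (simp add: mono_mult k_def)
  have r: "amono S' T' d * amono S T c = amono (S \<union> S') (T \<union> T') (if P = Q then k else - k)"
    using assms by (simp add: mono_mult co Un_commute)
  show ?thesis unfolding l r sg_def P_def[symmetric] Q_def[symmetric]
    by (simp add: mono_uminus)
qed

lemma G_mono: "finite S \<Longrightarrow> finite T \<Longrightarrow> amono S T c \<in> G (odd (card S)) (odd (card T))"
  unfolding G_def by (rule Gs_mono) auto

lemma comm_G_mono:
  assumes "b \<in> G p' q'" "finite S" "finite T"
  shows "amono S T c * b = sg (odd (card S)) (odd (card T)) p' q' * (b * amono S T c)"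
  using assms(1)[unfolded G_def]
proof (induction b rule: Gs_induct)
  case zero then show ?case by simp
next
  case (add a S' T' d)
  have 1: "amono S T c * a = sg (odd (card S)) (odd (card T)) p' q' * (a * amono S T c)" by (rule add.IH)
  have 2: "amono S T c * amono S' T' d = sg (odd (card S)) (odd (card T)) p' q' * (amono S' T' d * amono S T c)"
    using mono_comm[OF assms(2,3) add.hyps(2,3), of c d] add.hyps(4) by simp
  show ?case by (simp only: distrib_left distrib_right 1 2)
qed

lemma comm_G:
  assumes "a \<in> G p q" "b \<in> G p' q'"
  shows "a * b = sg p q p' q' * (b * a)"
  using assms(1)[unfolded G_def]
proof (induction a rule: Gs_induct)
  case zero then show ?case by simp
next
  case (add a S T c)
  have 1: "a * b = sg p q p' q' * (b * a)" by (rule add.IH)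
  have 2: "amono S T c * b = sg p q p' q' * (b * amono S T c)"
    using comm_G_mono[OF assms(2) add.hyps(2,3), of c] add.hyps(4) by simp
  show ?case by (simp only: distrib_left distrib_right 1 2)
qed

lemma commute_G: "a \<in> G p q \<Longrightarrow> b \<in> G p' q' \<Longrightarrow> (p \<and> p') = (q \<and> q') \<Longrightarrow> a * b = b * a"
proof -
  assume h: "a \<in> G p q" "b \<in> G p' q'" "(p \<and> p') = (q \<and> q')"
  then have "sg p q p' q' = (1::'a alg)" unfolding sg_def by (simp only: if_P)
  then show ?thesis using comm_G[OF h(1,2)] by simp
qed
lemma anti_G: "a \<in> G p q \<Longrightarrow> b \<in> G p' q' \<Longrightarrow> (p \<and> p') \<noteq> (q \<and> q') \<Longrightarrow> a * b = - (b * a)"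
proof -
  assume h: "a \<in> G p q" "b \<in> G p' q'" "(p \<and> p') \<noteq> (q \<and> q')"
  then have "sg p q p' q' = (-1::'a alg)" unfolding sg_def by (simp only: if_not_P if_False)
  then show ?thesis using comm_G[OF h(1,2)] by simp
qed

lemma G_0[simp]: "0 \<in> G p q" by (simp add: G_def)
lemma G_add: "a \<in> G p q \<Longrightarrow> b \<in> G p q \<Longrightarrow> a + b \<in> G p q" by (simp add: G_def Gs_add)
lemma G_uminus: "a \<in> G p q \<Longrightarrow> - a \<in> G p q" by (simp add: G_def Gs_uminus)
lemma G_diff: "a \<in> G p q \<Longrightarrow> b \<in> G p q \<Longrightarrow> a - b \<in> G p q" by (simp add: G_def Gs_diff)

lemma G_mono_mult:
  assumes "finite S" "finite T" "finite S'" "finite T'"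
  shows "amono S T c * amono S' T' d \<in> G (odd (card S) \<noteq> odd (card S')) (odd (card T) \<noteq> odd (card T'))"
proof (cases "S \<inter> S' = {} \<and> T \<inter> T' = {}")
  case True
  then have c1: "card (S \<union> S') = card S + card S'" and c2: "card (T \<union> T') = card T + card T'"
    using assms by (simp_all add: card_Un_disjoint)
  have "amono (S \<union> S') (T \<union> T') (c * d * (esign S S' * esign T T')) \<in> G (odd (card (S \<union> S'))) (odd (card (T \<union> T')))"
    using assms by (intro G_mono) auto
  then show ?thesis unfolding mono_mult[OF assms] c1 c2 by simp
next
  case False
  then have "(esign S S' * esign T T' :: 'a) = 0" by (auto simp: esign_def)
  then show ?thesis unfolding mono_mult[OF assms] by simp
qed

lemma G_mult_mono:
  assumes "b \<in> G p' q'" "finite S" "finite T"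
  shows "amono S T c * b \<in> G (odd (card S) \<noteq> p') (odd (card T) \<noteq> q')"
  using assms(1)[unfolded G_def]
proof (induction b rule: Gs_induct)
  case zero then show ?case by simp
next
  case (add a S' T' d)
  have "amono S T c * amono S' T' d \<in> G (odd (card S) \<noteq> p') (odd (card T) \<noteq> q')"
    using G_mono_mult[OF assms(2,3) add.hyps(2,3), of c d] add.hyps(4) by simp
  then show ?case unfolding distrib_left by (rule G_add[OF add.IH])
qed

lemma G_mult:
  assumes "a \<in> G p q" "b \<in> G p' q'"
  shows "a * b \<in> G (p \<noteq> p') (q \<noteq> q')"
  using assms(1)[unfolded G_def]
proof (induction a rule: Gs_induct)
  case zero then show ?case by simp
next
  case (add a S T c)
  have e: "odd (card S) = p" "odd (card T) = q" using add.hyps(4) by auto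
  have "amono S T c * b \<in> G (odd (card S) \<noteq> p') (odd (card T) \<noteq> q')"
    by (rule G_mult_mono[OF assms(2) add.hyps(2,3)])
  then have "amono S T c * b \<in> G (p \<noteq> p') (q \<noteq> q')" unfolding e .
  then show ?case unfolding distrib_right by (rule G_add[OF add.IH])
qed

lemma sc_G: "sc c \<in> G False False"
  using G_mono[of "{}" "{}" c] by (simp add: sc_mono)

lemma Ab_decomp:
  assumes "a \<in> Ab q"
  shows "\<exists>u v. a = u + v \<and> u \<in> G False q \<and> v \<in> G True q"
  using assms[unfolded Ab_def]
proof (induction a rule: Gs_induct)
  case zero
  have "(0::'a alg) = 0 + 0 \<and> 0 \<in> G False q \<and> (0::'a alg) \<in> G True q" by simp
  then show ?case by blast
next
  case (add a S T c)
  then obtain u v where uv: "a = u + v" "u \<in> G False q" "v \<in> G True q" by blast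
  have m: "amono S T c \<in> G (odd (card S)) q" using G_mono[of S T c] add by simp
  show ?case
  proof (cases "odd (card S)")
    case True
    then have "a + amono S T c = u + (v + amono S T c) \<and> u \<in> G False q \<and> v + amono S T c \<in> G True q"
      using uv m by (simp add: G_add add.assoc)
    then show ?thesis by blast
  next
    case False
    then have "a + amono S T c = (u + amono S T c) + v \<and> u + amono S T c \<in> G False q \<and> v \<in> G True q"
      using uv m by (simp add: G_add ac_simps)
    then show ?thesis by blast
  qed
qed

lemma Ab_0[simp]: "0 \<in> Ab q" by (simp add: Ab_def)
lemma Ab_add: "a \<in> Ab q \<Longrightarrow> b \<in> Ab q \<Longrightarrow> a + b \<in> Ab q" by (simp add: Ab_def Gs_add)

lemma Ab_mult:
  assumes "a \<in> Ab q" "b \<in> Ab q'"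
  shows "a * b \<in> Ab (q \<noteq> q')"
proof -
  obtain u v where a: "a = u + v" "u \<in> G False q" "v \<in> G True q" using Ab_decomp[OF assms(1)] by blast
  obtain u' v' where b: "b = u' + v'" "u' \<in> G False q'" "v' \<in> G True q'" using Ab_decomp[OF assms(2)] by blast
  have e: "a * b = u * u' + u * v' + (v * u' + v * v')" by (simp add: a b algebra_simps)
  have 1: "u * u' \<in> Ab (q \<noteq> q')" by (rule G_Ab[OF G_mult[OF a(2) b(2)]])
  have 2: "u * v' \<in> Ab (q \<noteq> q')" by (rule G_Ab[OF G_mult[OF a(2) b(3)]])
  have 3: "v * u' \<in> Ab (q \<noteq> q')" by (rule G_Ab[OF G_mult[OF a(3) b(2)]])
  have 4: "v * v' \<in> Ab (q \<noteq> q')" by (rule G_Ab[OF G_mult[OF a(3) b(3)]])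
  show ?thesis unfolding e by (intro Ab_add 1 2 3 4)
qed

lemma sc_Ab: "b \<in> Ab q \<Longrightarrow> sc c * b \<in> Ab q"
  using Ab_mult[OF G_Ab[OF sc_G], of b q c] by simp




definition ev :: "(var \<Rightarrow> 'k::comm_ring_1 alg) \<Rightarrow> 'k fpoly \<Rightarrow> 'k alg" where
  "ev \<psi> f = (\<Sum>w\<in>Poly_Mapping.keys f. sc (Poly_Mapping.lookup f w) * prod_list (map \<psi> w))"

lemma ev_superset:
  assumes "finite K" "Poly_Mapping.keys f \<subseteq> K"
  shows "ev \<psi> f = (\<Sum>w\<in>K. sc (Poly_Mapping.lookup f w) * prod_list (map \<psi> w))"
  unfolding ev_def
proof (rule sum.mono_neutral_left)
  show "\<forall>i\<in>K - Poly_Mapping.keys f. sc (Poly_Mapping.lookup f i) * prod_list (map \<psi> i) = 0"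
    by (simp add: not_in_keys_iff_lookup_eq_zero)
qed (use assms in auto)

lemma ev_add: "ev \<psi> (f + g) = ev \<psi> f + ev \<psi> g"
proof -
  let ?K = "Poly_Mapping.keys f \<union> Poly_Mapping.keys g"
  have e1: "ev \<psi> (f + g) = (\<Sum>w\<in>?K. sc (Poly_Mapping.lookup (f + g) w) * prod_list (map \<psi> w))"
    by (rule ev_superset) (use keys_add[of f g] in auto)
  have e2: "ev \<psi> f = (\<Sum>w\<in>?K. sc (Poly_Mapping.lookup f w) * prod_list (map \<psi> w))"
    by (rule ev_superset) auto
  have e3: "ev \<psi> g = (\<Sum>w\<in>?K. sc (Poly_Mapping.lookup g w) * prod_list (map \<psi> w))"
    by (rule ev_superset) auto
  show ?thesis unfolding e1 e2 e3
    by (simp only: lookup_add sc_add distrib_right sum.distrib)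
qed

lemma ev_zero[simp]: "ev \<psi> 0 = 0" by (simp add: ev_def)

lemma ev_uminus: "ev \<psi> (- f) = - ev \<psi> f"
proof -
  have "ev \<psi> (- f) + ev \<psi> f = 0"
    by (simp only: ev_add[symmetric] add.left_inverse ev_zero)
  then show ?thesis by (simp add: eq_neg_iff_add_eq_0)
qed

lemma ev_diff: "ev \<psi> (f - g) = ev \<psi> f - ev \<psi> g"
  by (simp only: diff_conv_add_uminus ev_add ev_uminus)

lemma ev_single: "ev \<psi> (Poly_Mapping.single w c) = sc c * prod_list (map \<psi> w)"
  by (cases "c = 0") (simp_all add: ev_def)

lemma ev_sum: "ev \<psi> (sum F J) = (\<Sum>i\<in>J. ev \<psi> (F i))"
  by (induction J rule: infinite_finite_induct) (simp_all add: ev_add)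

lemma pmul_add1: "(f1 + f2) \<odot> g = f1 \<odot> g + f2 \<odot> (g :: 'k::comm_ring_1 fpoly)"
  by (simp add: pmul_bext bext_add1)
lemma pmul_add2: "f \<odot> (g1 + g2) = f \<odot> g1 + f \<odot> (g2 :: 'k::comm_ring_1 fpoly)"
  by (simp add: pmul_bext bext_add2)
lemma pmul_zero1[simp]: "0 \<odot> (g :: 'k::comm_ring_1 fpoly) = 0" by (simp add: pmul_bext)
lemma pmul_zero2[simp]: "(f :: 'k::comm_ring_1 fpoly) \<odot> 0 = 0" by (simp add: pmul_bext)
lemma pmul_diff1: "(f1 - f2) \<odot> g = f1 \<odot> g - f2 \<odot> (g :: 'k::comm_ring_1 fpoly)"
  by (simp add: pmul_bext bext_diff1)
lemma pmul_diff2: "f \<odot> (g1 - g2) = f \<odot> g1 - f \<odot> (g2 :: 'k::comm_ring_1 fpoly)"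
  by (simp add: pmul_bext bext_diff2)
lemma pmul_single: "Poly_Mapping.single u c \<odot> Poly_Mapping.single v d = Poly_Mapping.single (u @ v) (c * (d :: 'k::comm_ring_1))"
  by (simp add: pmul_bext bext_single)

lemma sc_prod_comm: "sc c * x1 * (sc d * x2) = sc (c * d) * (x1 * x2)"
  by (simp add: sc_mult mult.assoc) (metis mult.assoc sc_comm)

lemma ev_mul_single:
  "ev \<psi> (Poly_Mapping.single u c \<odot> g) = ev \<psi> (Poly_Mapping.single u c) * ev \<psi> g"
proof (induction g rule: pm_induct)
  case zero then show ?case by simp
next
  case (add f k d)
  then show ?case
    by (simp add: pmul_add2 ev_add distrib_left pmul_single ev_single sc_prod_comm)
qed

lemma ev_mul: "ev \<psi> (f \<odot> g) = ev \<psi> f * ev \<psi> g"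
proof (induction f rule: pm_induct)
  case zero then show ?case by simp
next
  case (add f k d)
  then show ?case
    by (simp add: pmul_add1 ev_add distrib_right ev_mul_single)
qed

lemma ev_pvar[simp]: "ev \<psi> (pvar x) = \<psi> x"
  by (simp add: pvar_def ev_single)
lemma ev_pconst: "ev \<psi> (pconst c) = sc c"
  by (simp add: pconst_def ev_single)
lemma ev_pone[simp]: "ev \<psi> pone = 1"
  by (simp add: pone_def ev_pconst)
lemma ev_pprod: "ev \<psi> (pprod fs) = prod_list (map (ev \<psi>) fs)"
  by (induction fs) (simp_all add: pprod_def ev_mul)
lemma ev_pcomm[simp]: "ev \<psi> (pcomm a b) = ev \<psi> a * ev \<psi> b - ev \<psi> b * ev \<psi> a"
  by (simp add: pcomm_def ev_diff ev_mul)
lemma ev_pcirc[simp]: "ev \<psi> (pcirc a b) = ev \<psi> a * ev \<psi> b + ev \<psi> b * ev \<psi> a"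
  by (simp add: pcirc_def ev_add ev_mul)
lemma ev_pcomm3[simp]: "ev \<psi> (pcomm3 a b c) = ev \<psi> (pcomm (pcomm a b) c)"
  by (simp add: pcomm3_def)

lemma ev_psubst: "ev \<psi> (psubst \<sigma> f) = ev (ev \<psi> \<circ> \<sigma>) f"
  unfolding psubst_def ev_sum
  unfolding ev_def[of "ev \<psi> \<circ> \<sigma>" f]
  by (rule sum.cong[OF refl]) (simp add: ev_mul ev_pconst ev_pprod comp_def)

definition good :: "(var \<Rightarrow> 'k::comm_ring_1 alg) \<Rightarrow> bool" where
  "good \<psi> \<longleftrightarrow> (\<forall>i. \<psi> (Y i) \<in> Ab False \<and> \<psi> (Z i) \<in> Ab True)"

lemma one_Ab: "1 \<in> Ab False"
  using G_Ab[OF sc_G[of 1]] by simp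

lemma prod_Ab: "good \<psi> \<Longrightarrow> prod_list (map \<psi> w) \<in> Ab (odd (zcount w))"
proof (induction w)
  case Nil then show ?case by (simp add: one_Ab zcount_def)
next
  case (Cons x w)
  show ?case
  proof (cases x)
    case (Y i)
    then have "\<psi> x \<in> Ab False" using Cons.prems by (simp add: good_def)
    from Ab_mult[OF this Cons.IH[OF Cons.prems]] show ?thesis using Y by (simp add: zcount_def)
  next
    case (Z i)
    then have "\<psi> x \<in> Ab True" using Cons.prems by (simp add: good_def)
    from Ab_mult[OF this Cons.IH[OF Cons.prems]] show ?thesis using Z by (simp add: zcount_def)
  qed
qed

lemma Ab_sum: "(\<And>i. i \<in> J \<Longrightarrow> F i \<in> Ab q) \<Longrightarrow> sum F J \<in> Ab q"
  by (induction J rule: infinite_finite_induct) (simp_all add: Ab_add)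

lemma ev_homog: "good \<psi> \<Longrightarrow> homogeneous d g \<Longrightarrow> ev \<psi> g \<in> Ab (d = 1)"
  unfolding ev_def homogeneous_def
proof (rule Ab_sum)
  fix w assume "good \<psi>" "\<forall>w\<in>Poly_Mapping.keys g. zcount w mod 2 = d" "w \<in> Poly_Mapping.keys g"
  then have "prod_list (map \<psi> w) \<in> Ab (d = 1)" using prod_Ab[of \<psi> w] by (auto simp: odd_iff_mod_2_eq_one)
  then show "sc (Poly_Mapping.lookup g w) * prod_list (map \<psi> w) \<in> Ab (d = 1)" by (rule sc_Ab)
qed

lemma good_subst: "good \<psi> \<Longrightarrow> graded_subst \<sigma> \<Longrightarrow> good (ev \<psi> \<circ> \<sigma>)"
  unfolding graded_subst_def good_def[of "ev \<psi> \<circ> \<sigma>"] using ev_homog[of \<psi>] by fastforce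

lemma T2_ev:
  assumes "f \<in> T2_ideal S" "\<And>g \<psi>. g \<in> S \<Longrightarrow> good \<psi> \<Longrightarrow> ev \<psi> g = 0"
  shows "good \<psi> \<Longrightarrow> ev \<psi> f = 0"
  using assms(1)
proof (induction f arbitrary: \<psi> rule: T2_ideal.induct)
  case (gen f) then show ?case using assms(2) by blast
next
  case zero then show ?case by simp
next
  case (add f g) then show ?case by (simp add: ev_add)
next
  case (lmul f g) then show ?case by (simp add: ev_mul)
next
  case (rmul f g) then show ?case by (simp add: ev_mul)
next
  case (endo f \<sigma>)
  have "good (ev \<psi> \<circ> \<sigma>)" using good_subst endo by blast
  from endo.IH[OF this] show ?case by (simp add: ev_psubst comp_def)
qed

lemma rep_sum: "rep (sum F J) = (\<Sum>i\<in>J. rep (F i))"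
  by (induction J rule: infinite_finite_induct) (simp_all add: zero_alg.rep_eq plus_alg.rep_eq)

lemma rep_prod: "(\<And>x. rep (\<psi> x) = \<phi> x) \<Longrightarrow> rep (prod_list (map \<psi> w)) = aprod (map \<phi> w)"
  by (induction w) (simp_all add: aprod_def one_alg.rep_eq times_alg.rep_eq)

lemma T2_id_intro:
  assumes "\<And>\<psi>. good \<psi> \<Longrightarrow> ev \<psi> f = (0 :: 'k::comm_ring_1 alg)"
  shows "f \<in> T2_id"
  unfolding T2_id_def mem_Collect_eq
proof (intro allI impI)
  fix \<phi> :: "var \<Rightarrow> 'k tgr"
  assume h: "\<forall>i. \<phi> (Y i) \<in> A0 \<and> \<phi> (Z i) \<in> A1"
  have fk: "fk (\<phi> x)" for x
  proof (cases x)
    case (Y i)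
    then have "\<phi> x \<in> A0" using h by simp
    then show ?thesis unfolding A0_def fk_def by fastforce
  next
    case (Z i)
    then have "\<phi> x \<in> A1" using h by simp
    then show ?thesis unfolding A1_def fk_def by fastforce
  qed
  define \<psi> where "\<psi> x = abs (\<phi> x)" for x
  have r: "rep (\<psi> x) = \<phi> x" for x using fk by (simp add: \<psi>_def abs_inverse)
  have "good \<psi>"
    unfolding good_def
  proof
    fix i
    have a0: "\<phi> (Y i) \<in> A0" and a1: "\<phi> (Z i) \<in> A1" using h by auto
    have "\<forall>k\<in>Poly_Mapping.keys (\<phi> (Y i)). odd (card (snd k)) = False"
      using a0 unfolding A0_def by fastforce
    moreover have "\<forall>k\<in>Poly_Mapping.keys (\<phi> (Z i)). odd (card (snd k)) = True"
      using a1 unfolding A1_def by fastforce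
    ultimately show "\<psi> (Y i) \<in> Ab False \<and> \<psi> (Z i) \<in> Ab True"
      unfolding Ab_def Gs_def by (simp add: r)
  qed
  then have "ev \<psi> f = 0" by (rule assms)
  then have "rep (ev \<psi> f) = 0" by (simp add: zero_alg.rep_eq)
  moreover have "rep (ev \<psi> f) = aeval \<phi> f"
    unfolding ev_def aeval_def rep_sum
    by (rule sum.cong[OF refl]) (simp add: times_alg.rep_eq sc.rep_eq rep_prod[OF r])
  ultimately show "aeval \<phi> f = 0" by simp
qed




abbreviation GFF where "GFF \<equiv> G False False"
abbreviation GTF where "GTF \<equiv> G True False"
abbreviation GFT where "GFT \<equiv> G False True"
abbreviation GTT where "GTT \<equiv> G True True"

lemma cent_FF:
  assumes "x \<in> GFF" "w \<in> Ab q"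
  shows "x * w = w * x"
proof -
  obtain u v where w: "w = u + v" "u \<in> G False q" "v \<in> G True q" using Ab_decomp[OF assms(2)] by blast
  have "x * u = u * x" by (rule commute_G[OF assms(1) w(2)]) simp
  moreover have "x * v = v * x" by (rule commute_G[OF assms(1) w(3)]) simp
  ultimately show ?thesis by (simp add: w distrib_left distrib_right)
qed

lemma FT_Y:
  assumes "x \<in> GFT" "w \<in> Ab False"
  shows "x * w = w * x"
proof -
  obtain u v where w: "w = u + v" "u \<in> GFF" "v \<in> GTF" using Ab_decomp[OF assms(2)] by blast
  have "x * u = u * x" by (rule commute_G[OF assms(1) w(2)]) simp
  moreover have "x * v = v * x" by (rule commute_G[OF assms(1) w(3)]) simp
  ultimately show ?thesis by (simp add: w distrib_left distrib_right)
qed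

lemma FT_Z:
  assumes "x \<in> GFT" "w \<in> Ab True"
  shows "x * w = - (w * x)"
proof -
  obtain u v where w: "w = u + v" "u \<in> GFT" "v \<in> GTT" using Ab_decomp[OF assms(2)] by blast
  have "x * u = - (u * x)" by (rule anti_G[OF assms(1) w(2)]) simp
  moreover have "x * v = - (v * x)" by (rule anti_G[OF assms(1) w(3)]) simp
  ultimately show ?thesis by (simp add: w distrib_left distrib_right)
qed

lemma yz_comm:
  assumes "u \<in> GFF" "v \<in> GTF" "a \<in> GFT" "b \<in> GTT"
  shows "(u + v) * (a + b) - (a + b) * (u + v) = v * b + v * b"
proof -
  have 1: "a * u = u * a" by (rule commute_G[OF assms(3,1)]) simp
  have 2: "b * u = u * b" by (rule commute_G[OF assms(4,1)]) simp
  have 3: "a * v = v * a" by (rule commute_G[OF assms(3,2)]) simp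
  have 4: "b * v = - (v * b)" by (rule anti_G[OF assms(4,2)]) simp
  show ?thesis by (simp add: algebra_simps 1 2 3 4)
qed

lemma yy_comm:
  assumes "u \<in> GFF" "v \<in> GTF" "u' \<in> GFF" "v' \<in> GTF"
  shows "(u + v) * (u' + v') - (u' + v') * (u + v) = v * v' + v * v'"
proof -
  have 1: "u' * u = u * u'" by (rule commute_G[OF assms(3,1)]) simp
  have 2: "u' * v = v * u'" by (rule commute_G[OF assms(3,2)]) simp
  have 3: "v' * u = u * v'" by (rule commute_G[OF assms(4,1)]) simp
  have 4: "v' * v = - (v * v')" by (rule anti_G[OF assms(4,2)]) simp
  show ?thesis by (simp add: algebra_simps 1 2 3 4)
qed

lemma zz_circ:
  assumes "a \<in> GFT" "b \<in> GTT" "a' \<in> GFT" "b' \<in> GTT"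
  shows "(a + b) * (a' + b') + (a' + b') * (a + b) = b * b' + b * b'"
proof -
  have 1: "a' * a = - (a * a')" by (rule anti_G[OF assms(3,1)]) simp
  have 2: "b' * a = - (a * b')" by (rule anti_G[OF assms(4,1)]) simp
  have 3: "a' * b = - (b * a')" by (rule anti_G[OF assms(3,2)]) simp
  have 4: "b' * b = b * b'" by (rule commute_G[OF assms(4,2)]) simp
  show ?thesis by (simp add: algebra_simps 1 2 3 4)
qed

lemma mono_sq: "finite S \<Longrightarrow> finite T \<Longrightarrow> T \<noteq> {} \<Longrightarrow> amono S T c * amono S T c = 0"
  by (simp add: mono_mult esign_def)

lemma GFT_sq:
  assumes "a \<in> GFT" shows "a * a = 0"
  using assms[unfolded G_def]
proof (induction a rule: Gs_induct)
  case zero then show ?case by simp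
next
  case (add s S T c)
  have sG: "s \<in> GFT" using add.hyps(1) by (simp add: G_def)
  have mG: "amono S T c \<in> GFT" using G_mono[OF add.hyps(2,3), of c] add.hyps(4) by simp
  have T: "T \<noteq> {}" using add.hyps(4) by auto
  have 1: "amono S T c * s = - (s * amono S T c)" by (rule anti_G[OF mG sG]) simp
  have 2: "amono S T c * amono S T c = 0" by (rule mono_sq[OF add.hyps(2,3) T])
  show ?case by (simp add: algebra_simps 1 2 add.IH)
qed

lemma z_sq:
  assumes "a \<in> GFT" "b \<in> GTT"
  shows "(a + b) * (a + b) = b * b"
proof -
  have 1: "a * a = 0" by (rule GFT_sq[OF assms(1)])
  have 2: "b * a = - (a * b)" by (rule anti_G[OF assms(2,1)]) simp
  show ?thesis by (simp add: algebra_simps 1 2)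
qed

lemma binom_nil:
  fixes s m :: "'k::comm_ring_1 alg"
  assumes sm: "s * m = m * s" and mm: "m * m = 0"
  shows "(s + m) ^ Suc n = s ^ Suc n + of_nat (Suc n) * (s ^ n * m)"
proof (induction n)
  case 0 then show ?case by simp
next
  case (Suc n)
  have c1: "m * s ^ k = s ^ k * m" for k
    using power_commuting_commutes[OF sm, of k] by simp
  have c2: "m * (s ^ n * m) = 0" by (simp add: mult.assoc[symmetric] c1 mult.assoc mm)
  have "(s + m) ^ Suc (Suc n) = (s + m) * (s ^ Suc n + of_nat (Suc n) * (s ^ n * m))"
    by (simp only: power_Suc[of _ "Suc n"] Suc)
  also have "\<dots> = s ^ Suc (Suc n) + of_nat (Suc n) * (s ^ Suc n * m) + m * s ^ Suc n + of_nat (Suc n) * (m * (s ^ n * m))"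
    by (simp add: algebra_simps mult_of_nat_commute)
  also have "\<dots> = s ^ Suc (Suc n) + of_nat (Suc (Suc n)) * (s ^ Suc n * m)"
    by (simp only: c1 c2 mult_zero_right add_0_right) (simp add: algebra_simps)
  finally show ?case .
qed

lemma GTT_pow_fact:
  assumes "b \<in> GTT"
  shows "\<exists>c. b ^ n = of_nat (fact n) * (c :: 'k::comm_ring_1 alg)"
  using assms[unfolded G_def] 
proof (induction b arbitrary: n rule: Gs_induct)
  case zero
  show ?case by (cases n) (rule exI[of _ 1], simp, rule exI[of _ 0], simp)
next
  case (add s S T c)
  let ?m = "amono S T c"
  have sG: "s \<in> GTT" using add.hyps(1) by (simp add: G_def)
  have mG: "?m \<in> GTT" using G_mono[OF add.hyps(2,3), of c] add.hyps(4) by simp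
  have T: "T \<noteq> {}" using add.hyps(4) by auto
  have sm: "s * ?m = ?m * s" by (rule commute_G[OF sG mG]) simp
  have mm: "?m * ?m = 0" by (rule mono_sq[OF add.hyps(2,3) T])
  show ?case
  proof (cases n)
    case 0 then show ?thesis by (intro exI[of _ 1]) simp
  next
    case (Suc k)
    obtain c1 where c1: "s ^ Suc k = of_nat (fact (Suc k)) * c1" using add.IH by blast
    obtain c2 where c2: "s ^ k = of_nat (fact k) * c2" using add.IH by blast
    have "(s + ?m) ^ Suc k = s ^ Suc k + of_nat (Suc k) * (s ^ k * ?m)" by (rule binom_nil[OF sm mm])
    also have "\<dots> = of_nat (fact (Suc k)) * c1 + of_nat (Suc k) * (of_nat (fact k) * c2 * ?m)" by (simp only: c1 c2)
    also have "\<dots> = of_nat (fact (Suc k)) * c1 + of_nat (fact (Suc k)) * (c2 * ?m)"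
      by (simp only: fact_Suc of_nat_id of_nat_mult mult.assoc)
    also have "\<dots> = of_nat (fact (Suc k)) * (c1 + c2 * ?m)"
      by (simp only: distrib_left)
    finally show ?thesis using Suc by blast
  qed
qed

lemma GTT_pow_char:
  assumes "b \<in> GTT" "of_nat (fact p) = (0 :: 'k::comm_ring_1)"
  shows "b ^ p = (0 :: 'k alg)"
proof -
  obtain c where "b ^ p = of_nat (fact p) * c" using GTT_pow_fact[OF assms(1)] by blast
  moreover have "(of_nat (fact p) :: 'k alg) = 0" by (simp add: of_nat_sc assms(2))
  ultimately show ?thesis by simp
qed

lemma b_pass:
  assumes "b \<in> GTT" "X \<in> G P Q"
  shows "\<exists>X'. X' \<in> G P Q \<and> b * X = X' * b"
proof (cases "(True \<and> P) = (True \<and> Q)")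
  case True
  then have "b * X = X * b" using commute_G[OF assms] by simp
  then show ?thesis using assms(2) by blast
next
  case False
  then have "b * X = - (X * b)" using anti_G[OF assms] by simp
  then have "b * X = (- X) * b" by simp
  then show ?thesis using G_uminus[OF assms(2)] by blast
qed

lemma prod_pass:
  assumes "b \<in> GTT" "\<And>i. i \<in> set L \<Longrightarrow> V i \<in> GTF"
  shows "\<exists>X P Q. X \<in> G P Q \<and> prod_list (map (\<lambda>i. V i * b + V i * b) L) * b ^ m = X * b ^ (m + length L)"
  using assms(2)
proof (induction L)
  case Nil
  show ?case using sc_G[of 1] by (intro exI[of _ 1] exI[of _ False]) simp
next
  case (Cons i L)
  obtain X P Q where X: "X \<in> G P Q" "prod_list (map (\<lambda>i. V i * b + V i * b) L) * b ^ m = X * b ^ (m + length L)"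
    using Cons by auto
  obtain X' where X': "X' \<in> G P Q" "b * X = X' * b" using b_pass[OF assms(1) X(1)] by blast
  have Vi: "V i \<in> GTF" using Cons.prems by simp
  have "prod_list (map (\<lambda>i. V i * b + V i * b) (i # L)) * b ^ m = (V i * b + V i * b) * (X * b ^ (m + length L))"
    using X(2) by (simp add: mult.assoc)
  also have "\<dots> = (V i * (b * X) + V i * (b * X)) * b ^ (m + length L)"
    by (simp add: algebra_simps)
  also have "\<dots> = (V i * X' + V i * X') * b ^ (m + length (i # L))"
    by (simp add: X'(2) algebra_simps)
  finally have "prod_list (map (\<lambda>i. V i * b + V i * b) (i # L)) * b ^ m = (V i * X' + V i * X') * b ^ (m + length (i # L))" .
  moreover have "V i * X' + V i * X' \<in> G (True \<noteq> P) (False \<noteq> Q)"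
    using G_mult[OF Vi X'(1)] by (intro G_add)
  ultimately show ?case by blast
qed




lemma decomp_fun:
  assumes "good (\<psi> :: var \<Rightarrow> 'k::comm_ring_1 alg)"
  shows "\<exists>U V A B. \<forall>i. \<psi> (Y i) = U i + V i \<and> U i \<in> GFF \<and> V i \<in> GTF \<and> \<psi> (Z i) = A i + B i \<and> A i \<in> GFT \<and> B i \<in> GTT"
proof -
  have "\<forall>i. \<exists>q. \<psi> (Y i) = fst (fst q) + snd (fst q) \<and> fst (fst q) \<in> GFF \<and> snd (fst q) \<in> GTF \<and>
              \<psi> (Z i) = fst (snd q) + snd (snd q) \<and> fst (snd q) \<in> GFT \<and> snd (snd q) \<in> GTT"
  proof
    fix i
    obtain u v where uv: "\<psi> (Y i) = u + v" "u \<in> GFF" "v \<in> GTF"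
      using Ab_decomp[of "\<psi> (Y i)" False] assms by (auto simp: good_def)
    obtain a b where ab: "\<psi> (Z i) = a + b" "a \<in> GFT" "b \<in> GTT"
      using Ab_decomp[of "\<psi> (Z i)" True] assms by (auto simp: good_def)
    show "\<exists>q. \<psi> (Y i) = fst (fst q) + snd (fst q) \<and> fst (fst q) \<in> GFF \<and> snd (fst q) \<in> GTF \<and>
              \<psi> (Z i) = fst (snd q) + snd (snd q) \<and> fst (snd q) \<in> GFT \<and> snd (snd q) \<in> GTT"
      by (rule exI[of _ "((u, v), (a, b))"]) (simp add: uv ab)
  qed
  then obtain F where F: "\<forall>i. \<psi> (Y i) = fst (fst (F i)) + snd (fst (F i)) \<and> fst (fst (F i)) \<in> GFF \<and> snd (fst (F i)) \<in> GTF \<and>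
              \<psi> (Z i) = fst (snd (F i)) + snd (snd (F i)) \<and> fst (snd (F i)) \<in> GFT \<and> snd (snd (F i)) \<in> GTT"
    by (metis choice)
  show ?thesis
    by (rule exI[of _ "\<lambda>i. fst (fst (F i))"], rule exI[of _ "\<lambda>i. snd (fst (F i))"],
        rule exI[of _ "\<lambda>i. fst (snd (F i))"], rule exI[of _ "\<lambda>i. snd (snd (F i))"]) (use F in blast)
qed

locale dec =
  fixes \<psi> :: "var \<Rightarrow> 'k::comm_ring_1 alg" and U V A B :: "nat \<Rightarrow> 'k alg"
  assumes d: "\<And>i. \<psi> (Y i) = U i + V i" "\<And>i. U i \<in> GFF" "\<And>i. V i \<in> GTF"
             "\<And>i. \<psi> (Z i) = A i + B i" "\<And>i. A i \<in> GFT" "\<And>i. B i \<in> GTT"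
begin

lemma cyz: "\<psi> (Y i) * \<psi> (Z j) - \<psi> (Z j) * \<psi> (Y i) = V i * B j + V i * B j"
  unfolding d(1,4) by (rule yz_comm) (simp_all add: d)
lemma czy: "\<psi> (Z j) * \<psi> (Y i) - \<psi> (Y i) * \<psi> (Z j) = - (V i * B j + V i * B j)"
  using cyz[of i j] by (metis minus_diff_eq)
lemma cyy: "\<psi> (Y i) * \<psi> (Y j) - \<psi> (Y j) * \<psi> (Y i) = V i * V j + V i * V j"
  unfolding d(1) by (rule yy_comm) (simp_all add: d)
lemma czz: "\<psi> (Z i) * \<psi> (Z j) + \<psi> (Z j) * \<psi> (Z i) = B i * B j + B i * B j"
  unfolding d(4) by (rule zz_circ) (simp_all add: d)

lemma yAb: "\<psi> (Y i) \<in> Ab False"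
  unfolding d(1) by (rule Ab_add; rule G_Ab, rule d)
lemma zAb: "\<psi> (Z i) \<in> Ab True"
  unfolding d(4) by (rule Ab_add; rule G_Ab, rule d)

lemma VV: "V i * V j + V i * V j \<in> GFF"
  using G_mult[OF d(3)[of i] d(3)[of j]] by (intro G_add) simp_all
lemma VB: "V i * B j + V i * B j \<in> GFT"
  using G_mult[OF d(3)[of i] d(6)[of j]] by (intro G_add) simp_all
lemma BB: "B i * B j + B i * B j \<in> GFF"
  using G_mult[OF d(6)[of i] d(6)[of j]] by (intro G_add) simp_all

lemma swVV: "V i * (V j * w) = - (V j * (V i * w))"
  using anti_G[OF d(3)[of i] d(3)[of j]] by (simp add: mult.assoc[symmetric])
lemma swBB: "B i * (B j * w) = B j * (B i * w)"
  using commute_G[OF d(6)[of i] d(6)[of j]] by (simp add: mult.assoc[symmetric])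
lemma swBV: "B i * (V j * w) = - (V j * (B i * w))"
  using anti_G[OF d(6)[of i] d(3)[of j]] by (simp add: mult.assoc[symmetric])

lemmas evs = ev_pcomm ev_pcirc ev_pcomm3 ev_mul ev_pvar ev_add ev_diff

lemma g1a: "ev \<psi> (pcomm3 (y 1) (y 2) (y 3)) = 0"
  by (simp only: evs cyy cent_FF[OF VV yAb] diff_self)
lemma g1b: "ev \<psi> (pcomm3 (y 1) (y 2) (z 3)) = 0"
  by (simp only: evs cyy cent_FF[OF VV zAb] diff_self)
lemma g2: "ev \<psi> (pcomm3 (y 1) (z 2) (y 3)) = 0"
  by (simp only: evs cyz FT_Y[OF VB yAb] diff_self)
lemma g3: "ev \<psi> (pcirc (pcomm (y 1) (z 2)) (z 3)) = 0"
  by (simp only: evs cyz FT_Z[OF VB zAb] neg_eq_iff_add_eq_0[symmetric] add.commute)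
lemma g4: "ev \<psi> (pcomm (pcirc (z 1) (z 2)) (z 3)) = 0"
  by (simp only: evs czz cent_FF[OF BB zAb] diff_self)
lemma g5: "ev \<psi> (pcirc (z 1) (z 2) \<odot> pcirc (z 3) (z 4) - pcirc (z 1) (z 3) \<odot> pcirc (z 2) (z 4)) = 0"
  by (simp only: evs czz) (simp add: algebra_simps swBB[of 3 2])
lemma g7: "ev \<psi> (pcomm (y 1) (z 2) \<odot> pcirc (z 3) (z 4) - pcomm (y 1) (z 3) \<odot> pcirc (z 2) (z 4)) = 0"
  by (simp only: evs czz cyz) (simp add: algebra_simps swBB[of 3 2])
lemma g6yy: "ev \<psi> (pcomm (y 1) (y 2) \<odot> pcomm (y 3) (y 4) + pcomm (y 1) (y 3) \<odot> pcomm (y 2) (y 4)) = 0"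
  by (simp only: evs cyy) (simp add: algebra_simps swVV[of 3 2])
lemma g6zy: "ev \<psi> (pcomm (z 1) (y 2) \<odot> pcomm (y 3) (y 4) + pcomm (z 1) (y 3) \<odot> pcomm (y 2) (y 4)) = 0"
  by (simp only: evs cyy czy) (simp add: algebra_simps swVV[of 3 2] swBV[of 1 2] swBV[of 1 3] swBV[of "Suc 0" 2] swBV[of "Suc 0" 3])
lemma g6yz: "ev \<psi> (pcomm (y 1) (y 2) \<odot> pcomm (y 3) (z 4) + pcomm (y 1) (y 3) \<odot> pcomm (y 2) (z 4)) = 0"
  by (simp only: evs cyy cyz) (simp add: algebra_simps swVV[of 3 2])
lemma g6zz: "ev \<psi> (pcomm (z 1) (y 2) \<odot> pcomm (y 3) (z 4) + pcomm (z 1) (y 3) \<odot> pcomm (y 2) (z 4)) = 0"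
  by (simp only: evs cyz czy) (simp add: algebra_simps swVV[of 3 2] swBV[of 1 2] swBV[of 1 3] swBV[of "Suc 0" 2] swBV[of "Suc 0" 3])

lemma zpow: "prod_list (replicate (2 * n) (\<psi> (Z 1))) = B 1 ^ (2 * n)"
proof -
  have "\<psi> (Z 1) * \<psi> (Z 1) = B 1 * B 1" unfolding d(4) by (rule z_sq) (simp_all add: d)
  then show ?thesis by (simp add: prod_list_replicate power_mult power2_eq_square)
qed

lemma pcomm_list: "prod_list (map (ev \<psi>) (map (\<lambda>i. pcomm (y i) (z 1)) L)) = prod_list (map (\<lambda>i. V i * B 1 + V i * B 1) L)"
  by (simp add: comp_def cyz)

lemma g9:
  assumes "of_nat (fact p) = (0::'k)" "k \<ge> 1" "2 * n + 2 * k - 1 = p"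
  shows "ev \<psi> (pprod (map (\<lambda>i. pcomm (y i) (z 1)) [1..<2*k]) \<odot> pprod (replicate (2*n) (z 1))) = 0"
proof -
  obtain X P Q where X: "X \<in> G P Q"
    "prod_list (map (\<lambda>i. V i * B 1 + V i * B 1) [1..<2*k]) * B 1 ^ (2 * n) = X * B 1 ^ (2 * n + length [1..<2*k])"
    using prod_pass[OF d(6)[of 1], of "[1..<2*k]" V "2 * n"] d(3) by blast
  have len: "2 * n + length [1..<2*k] = p" using assms(2,3) by simp
  have "ev \<psi> (pprod (map (\<lambda>i. pcomm (y i) (z 1)) [1..<2*k]) \<odot> pprod (replicate (2*n) (z 1))) = X * B 1 ^ p"
    by (simp only: ev_mul ev_pprod pcomm_list map_replicate ev_pvar zpow X(2) len)
  also have "\<dots> = 0" using GTT_pow_char[OF d(6)[of 1] assms(1)] by simp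
  finally show ?thesis .
qed

lemma g8:
  assumes "of_nat (fact p) = (0::'k)" "k \<ge> 1" "2 * n + 2 * k - 1 = p"
  shows "ev \<psi> (pprod (map (\<lambda>i. pcomm (y i) (z 1)) [1..<2*k-1]) \<odot> pcirc (z 2) (z 1) \<odot> pprod (replicate (2*n) (z 1))) = 0"
proof -
  obtain X P Q where X: "X \<in> G P Q"
    "prod_list (map (\<lambda>i. V i * B 1 + V i * B 1) [1..<2*k-1]) * B 1 ^ (Suc (2 * n)) = X * B 1 ^ (Suc (2 * n) + length [1..<2*k-1])"
    using prod_pass[OF d(6)[of 1], of "[1..<2*k-1]" V "Suc (2 * n)"] d(3) by blast
  have len: "Suc (2 * n) + length [1..<2*k-1] = p" using assms(2,3) by simp
  have c21: "B 2 * B 1 = B 1 * B 2" using commute_G[OF d(6)[of 2] d(6)[of 1]] by simp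
  have cp: "B 2 * B 1 ^ m = B 1 ^ m * B 2" for m
    using power_commuting_commutes[OF c21[symmetric], of m] by simp
  have circ: "(B 2 * B 1 + B 2 * B 1) * B 1 ^ (2 * n) = B 1 ^ Suc (2 * n) * B 2 + B 1 ^ Suc (2 * n) * B 2"
    by (simp only: distrib_right mult.assoc power_Suc[symmetric] cp)
  have "ev \<psi> (pprod (map (\<lambda>i. pcomm (y i) (z 1)) [1..<2*k-1]) \<odot> pcirc (z 2) (z 1) \<odot> pprod (replicate (2*n) (z 1)))
      = prod_list (map (\<lambda>i. V i * B 1 + V i * B 1) [1..<2*k-1]) * ((B 2 * B 1 + B 2 * B 1) * B 1 ^ (2 * n))"
    by (simp only: ev_mul ev_pprod pcomm_list map_replicate ev_pvar zpow ev_pcirc czz mult.assoc)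
  also have "\<dots> = X * B 1 ^ p * B 2 + X * B 1 ^ p * B 2"
    by (simp only: circ distrib_left mult.assoc[symmetric] X(2) len)
  also have "\<dots> = 0" using GTT_pow_char[OF d(6)[of 1] assms(1)] by simp
  finally show ?thesis .
qed

end

lemma gens_ev:
  assumes "g \<in> gens p" "good \<psi>" "of_nat (fact p) = (0::'k::comm_ring_1)"
  shows "ev (\<psi> :: var \<Rightarrow> 'k alg) g = 0"
proof -
  obtain U V A B where "\<forall>i. \<psi> (Y i) = U i + V i \<and> U i \<in> GFF \<and> V i \<in> GTF \<and> \<psi> (Z i) = A i + B i \<and> A i \<in> GFT \<and> B i \<in> GTT"
    using decomp_fun[OF assms(2)] by blast
  then interpret dec \<psi> U V A B by unfold_locales auto
  show ?thesis
    using assms(1) unfolding gens_def Un_iff insert_iff singleton_iff mem_Collect_eq empty_iff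
  proof (elim disjE exE conjE)
  qed (simp_all only: g1a g1b g2 g3 g4 g5 g7 g6yy g6zy g6yz g6zz g8[OF assms(3)] g9[OF assms(3)])
qed

theorem lemma13:
  fixes p :: nat
  assumes "infinite (UNIV :: 'k::field set)"
    and "CHAR('k) = p"
    and "p > 2"
  shows "(I p :: 'k fpoly set) \<subseteq> T2_id"
proof
  fix f :: "'k fpoly" assume f: "f \<in> I p"
  have fp: "of_nat (fact p) = (0::'k)"
  proof -
    have "p > 0" using assms(3) by simp
    then have "fact p = p * fact (p - 1)" using fact_reduce[of p, where 'a = nat] by simp
    then have "(of_nat (fact p) :: 'k) = of_nat p * of_nat (fact (p - 1))" by simp
    also have "(of_nat p :: 'k) = 0" using assms(2) of_nat_CHAR by metis
    finally show ?thesis by simp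
  qed
  show "f \<in> T2_id"
  proof (rule T2_id_intro)
    fix \<psi> :: "var \<Rightarrow> 'k alg" assume "good \<psi>"
    have "\<And>g \<psi>'. g \<in> gens p \<Longrightarrow> good \<psi>' \<Longrightarrow> ev \<psi>' g = (0 :: 'k alg)"
      using gens_ev fp by blast
    then show "ev \<psi> f = 0"
      by (rule T2_ev[OF f[unfolded I_def] _ \<open>good \<psi>\<close>])
  qed
qed


end
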